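(* Fix $c\in\{1,\dots,K-1\}$ and suppose the density $\bar p_c$ satisfies the generation assumption $$\bar p_c(\bm x,\bar Y)=\binom{K-1}{c}^{-1}\sum_{y\notin \bar Y}p(\bm x,y)\qquad(\bm x\in\mathcal X,\ \bar Y\in\overline{\mathcal Y}_c).$$ Then for any loss function $\ell$ and any decision function $\bm g$ (for which the expectations below are finite), the classification risk satisfies $R(\bm g)=R_c(\bm g)$, where $$R_c(\bm g)=\mathbb E_{\bar p_c(\bm x,\bar Y)}\big[\bar\ell(\bm g(\bm x),\bar Y)\big],\qquad \bar\ell(\bm g(\bm x),\bar Y):=\sum_{y=1}^K\ell(\bm g(\bm x),y)-\frac{K-1}{|\bar Y|}\sum_{y\in\bar Y}\ell(\bm g(\bm x),y).$$
   Context: Let $K\ge 2$, $\mathcal X\subseteq\mathbb R^d$ the feature space and $\mathcal Y=\{1,\dots,K\}$ the label space. Let $p(\bm x,y)$ be a joint density on $\mathcal X\times\mathcal Y$ with marginal density $p(\bm x)$. For $c\in\{1,\dots,K-1\}$, $\overline{\mathcal Y}_c$ denotes the collection of all $c$-element subsets of $\{1,\dots,K\}$ ("complementary-label sets" of size $c$), and $\bar p_c(\bm x,\bar Y)$ is a density on $\mathcal X\times\overline{\mathcal Y}_c$. A decision function is a map $\bm g:\mathcal X\to\mathbb R^K$, a loss is a function $\ell:\mathbb R^K\times\mathcal Y\to[0,\infty)$, and the classification risk is $R(\bm g)=\mathbb E_{p(\bm x,y)}[\ell(\bm g(\bm x),y)]$. *)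

theory Defs
  imports "HOL-Analysis.Analysis"
begin

text \<open>Labels: the finite type 'k with CARD('k) = K plays the role of {1,...,K}. Features: a Euclidean space 'a (= R^d),
  with feature space X a (measurable) subset; densities are w.r.t. Lebesgue
  measure on X and counting measure on labels / label sets.\<close>

definition compl_label_sets :: "nat \<Rightarrow> 'k::finite set set" where
  "compl_label_sets c = {Yb. card Yb = c}"

definition risk ::
  "'a::euclidean_space set \<Rightarrow> ('a \<Rightarrow> 'k::finite \<Rightarrow> real) \<Rightarrow>
   (real^'k \<Rightarrow> 'k \<Rightarrow> real) \<Rightarrow> ('a \<Rightarrow> real^'k) \<Rightarrow> real" where
  "risk X p loss g = (LINT x:X|lborel. (\<Sum>y\<in>UNIV. p x y * loss (g x) y))"

definition compl_loss ::
  "(real^'k::finite \<Rightarrow> 'k \<Rightarrow> real) \<Rightarrow> real^'k \<Rightarrow> 'k set \<Rightarrow> real" where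
  "compl_loss loss v Yb =
     (\<Sum>y\<in>UNIV. loss v y) - (real CARD('k) - 1) / real (card Yb) * (\<Sum>y\<in>Yb. loss v y)"

definition compl_risk ::
  "nat \<Rightarrow> 'a::euclidean_space set \<Rightarrow> ('a \<Rightarrow> 'k::finite set \<Rightarrow> real) \<Rightarrow>
   (real^'k \<Rightarrow> 'k \<Rightarrow> real) \<Rightarrow> ('a \<Rightarrow> real^'k) \<Rightarrow> real" where
  "compl_risk c X pc loss g =
     (LINT x:X|lborel. (\<Sum>Yb\<in>compl_label_sets c. pc x Yb * compl_loss loss (g x) Yb))"

end

theory Submission imports Defs begin
lemma cnt2:
  fixes y y' :: "'k::finite"
  assumes "y \<noteq> y'" "1 \<le> c" "CARD('k) \<ge> 2"
  shows "card {Yb::'k set. card Yb = c \<and> y \<notin> Yb \<and> y' \<in> Yb} = (CARD('k) - 2) choose (c - 1)"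
proof -
  let ?A = "{B. B \<subseteq> UNIV - {y} \<and> card B = c}"
  let ?B = "{B. B \<subseteq> UNIV - {y, y'} \<and> card B = c}"
  have e: "{Yb::'k set. card Yb = c \<and> y \<notin> Yb \<and> y' \<in> Yb} = ?A - ?B" by blast
  have sub: "?B \<subseteq> ?A" by blast
  have cA: "card ?A = (CARD('k) - 1) choose c"
    using n_subsets[of "UNIV - {y}" c] by (simp add: card_Diff_singleton)
  have "card (UNIV - {y, y'}) = CARD('k) - 2"
  proof -
    have "UNIV - {y, y'} = (UNIV - {y}) - {y'}" by blast
    then show ?thesis using assms(1) by (simp add: card_Diff_singleton)
  qed
  then have cB: "card ?B = (CARD('k) - 2) choose c"
    using n_subsets[of "UNIV - {y, y'}" c] by simp
  have fin: "finite ?B" by simp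
  have "card (?A - ?B) = card ?A - card ?B" using card_Diff_subset[OF fin sub] .
  also have "\<dots> = (CARD('k) - 2) choose (c - 1)"
  proof -
    define n where "n = CARD('k) - 2"
    have n: "CARD('k) - 1 = Suc n" using assms(3) unfolding n_def by linarith
    obtain k where k: "c = Suc k" using assms(2) by (cases c) auto
    show ?thesis unfolding cA cB n_def[symmetric] n unfolding k by simp
  qed
  finally show ?thesis using e by simp
qed
lemma cnt1:
  fixes y :: "'k::finite"
  shows "card {Yb::'k set. card Yb = c \<and> y \<notin> Yb} = (CARD('k) - 1) choose c"
proof -
  have "{Yb::'k set. card Yb = c \<and> y \<notin> Yb} = {B. B \<subseteq> UNIV - {y} \<and> card B = c}" by blast
  moreover have "card (UNIV - {y}) = CARD('k) - 1" by (simp add: card_Diff_singleton)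
  ultimately show ?thesis using n_subsets[of "UNIV - {y}" c] by simp
qed

lemma pointwise:
  fixes a l :: "'k::finite \<Rightarrow> real"
  assumes K2: "CARD('k) \<ge> 2" and c1: "1 \<le> c" and c2: "c \<le> CARD('k) - 1"
  shows "(\<Sum>Yb\<in>{Yb::'k set. card Yb = c}. (\<Sum>y\<in>UNIV - Yb. a y) / real ((CARD('k) - 1) choose c)
           * ((\<Sum>y\<in>UNIV. l y) - (real CARD('k) - 1) / real (card Yb) * (\<Sum>y\<in>Yb. l y)))
         = (\<Sum>y\<in>UNIV. a y * l y)"
proof -
  let ?S = "{Yb::'k set. card Yb = c}"
  define N where "N = real ((CARD('k) - 1) choose c)"
  define M where "M = real ((CARD('k) - 2) choose (c - 1))"
  define L where "L = (\<Sum>y\<in>UNIV. l y)"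
  define P where "P = (\<Sum>y\<in>UNIV. a y)"
  define Q where "Q = (\<Sum>y\<in>UNIV. a y * l y)"
  have finS: "finite ?S" by simp
  have Npos: "N > 0" unfolding N_def using c2 by simp
  have NM: "(real CARD('k) - 1) / real c * M = N"
  proof -
    define n where "n = CARD('k) - 2"
    have n: "CARD('k) - 1 = Suc n" using K2 unfolding n_def by linarith
    have rk: "real CARD('k) - 1 = real (Suc n)" using n K2 by simp
    obtain k where k: "c = Suc k" using c1 by (cases c) auto
    have "real (Suc n) * M = N * real c"
      unfolding M_def N_def n_def[symmetric] n k
      using Suc_times_binomial_eq[of n k] by (metis diff_Suc_1 of_nat_mult)
    then show ?thesis unfolding rk using c1 by (simp add: field_simps)
  qed
  have T1: "(\<Sum>Yb\<in>?S. (\<Sum>y\<in>UNIV - Yb. a y)) = N * P"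
  proof -
    have "(\<Sum>Yb\<in>?S. (\<Sum>y\<in>UNIV - Yb. a y)) = (\<Sum>Yb\<in>?S. (\<Sum>y\<in>{y\<in>UNIV. y \<notin> Yb}. a y))"
      by (intro sum.cong) auto
    also have "\<dots> = (\<Sum>y\<in>UNIV. \<Sum>Yb\<in>{Yb\<in>?S. y \<notin> Yb}. a y)"
      by (rule sum.swap_restrict) auto
    also have "\<dots> = (\<Sum>y\<in>UNIV. N * a y)"
    proof (intro sum.cong refl)
      fix y :: 'k
      have "{Yb\<in>?S. y \<notin> Yb} = {Yb. card Yb = c \<and> y \<notin> Yb}" by blast
      then show "(\<Sum>Yb\<in>{Yb\<in>?S. y \<notin> Yb}. a y) = N * a y"
        using cnt1[of c y] unfolding N_def by simp
    qed
    finally show ?thesis unfolding P_def by (simp add: sum_distrib_left)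
  qed
  have T2: "(\<Sum>Yb\<in>?S. (\<Sum>y\<in>UNIV - Yb. a y) * (\<Sum>y\<in>Yb. l y)) = M * (P * L - Q)"
  proof -
    have "(\<Sum>Yb\<in>?S. (\<Sum>y\<in>UNIV - Yb. a y) * (\<Sum>y\<in>Yb. l y))
        = (\<Sum>Yb\<in>?S. (\<Sum>y\<in>{y\<in>UNIV. y \<notin> Yb}. \<Sum>y'\<in>{y'\<in>UNIV. y' \<in> Yb}. a y * l y'))"
      by (intro sum.cong refl) (simp add: sum_product set_diff_eq Collect_mem_eq)
    also have "\<dots> = (\<Sum>y\<in>UNIV. \<Sum>Yb\<in>{Yb\<in>?S. y \<notin> Yb}. \<Sum>y'\<in>{y'\<in>UNIV. y' \<in> Yb}. a y * l y')"
      by (rule sum.swap_restrict) auto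
    also have "\<dots> = (\<Sum>y\<in>UNIV. \<Sum>y'\<in>UNIV. \<Sum>Yb\<in>{Yb\<in>{Yb\<in>?S. y \<notin> Yb}. y' \<in> Yb}. a y * l y')"
      by (intro sum.cong refl sum.swap_restrict) auto
    also have "\<dots> = (\<Sum>y\<in>UNIV. \<Sum>y'\<in>UNIV. (if y = y' then 0 else M) * (a y * l y'))"
    proof (intro sum.cong refl)
      fix y y' :: 'k
      have e: "{Yb\<in>{Yb\<in>?S. y \<notin> Yb}. y' \<in> Yb} = {Yb. card Yb = c \<and> y \<notin> Yb \<and> y' \<in> Yb}" by blast
      show "(\<Sum>Yb\<in>{Yb\<in>{Yb\<in>?S. y \<notin> Yb}. y' \<in> Yb}. a y * l y') = (if y = y' then 0 else M) * (a y * l y')"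
      proof (cases "y = y'")
        case True
        then have "{Yb\<in>{Yb\<in>?S. y \<notin> Yb}. y' \<in> Yb} = {}" by blast
        then show ?thesis using True by simp
      next
        case False
        then show ?thesis unfolding e using cnt2[OF False c1 K2] unfolding M_def by simp
      qed
    qed
    also have "\<dots> = (\<Sum>y\<in>UNIV. \<Sum>y'\<in>UNIV. M * (a y * l y')) - (\<Sum>y\<in>UNIV. M * (a y * l y))"
    proof -
      have "\<And>y. (\<Sum>y'\<in>UNIV. (if y = y' then 0 else M) * (a y * l y'))
          = (\<Sum>y'\<in>UNIV. M * (a y * l y')) - M * (a y * l y)"
      proof -
        fix y :: 'k
        have "(\<Sum>y'\<in>UNIV. (if y = y' then 0 else M) * (a y * l y'))
            = (\<Sum>y'\<in>UNIV. M * (a y * l y') - (if y = y' then M * (a y * l y') else 0))"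
          by (intro sum.cong refl) auto
        also have "\<dots> = (\<Sum>y'\<in>UNIV. M * (a y * l y')) - M * (a y * l y)"
          by (simp add: sum_subtractf)
        finally show "(\<Sum>y'\<in>UNIV. (if y = y' then 0 else M) * (a y * l y'))
          = (\<Sum>y'\<in>UNIV. M * (a y * l y')) - M * (a y * l y)" .
      qed
      then show ?thesis by (simp add: sum_subtractf)
    qed
    also have "\<dots> = M * (P * L - Q)"
    proof -
      have "(\<Sum>y\<in>UNIV. \<Sum>y'\<in>UNIV. M * (a y * l y')) = M * (P * L)"
      proof -
        have "P * L = (\<Sum>y\<in>UNIV. \<Sum>y'\<in>UNIV. a y * l y')"
          unfolding P_def L_def by (rule sum_product)
        then show ?thesis by (simp add: sum_distrib_left)
      qed
      moreover have "(\<Sum>y\<in>UNIV. M * (a y * l y)) = M * Q"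
        unfolding Q_def by (simp only: sum_distrib_left)
      ultimately show ?thesis by (simp add: right_diff_distrib)
    qed
    finally show ?thesis .
  qed
  have "(\<Sum>Yb\<in>?S. (\<Sum>y\<in>UNIV - Yb. a y) / real ((CARD('k) - 1) choose c)
           * ((\<Sum>y\<in>UNIV. l y) - (real CARD('k) - 1) / real (card Yb) * (\<Sum>y\<in>Yb. l y)))
      = (\<Sum>Yb\<in>?S. (L / N) * (\<Sum>y\<in>UNIV - Yb. a y)
          - ((real CARD('k) - 1) / real c / N) * ((\<Sum>y\<in>UNIV - Yb. a y) * (\<Sum>y\<in>Yb. l y)))"
  proof (intro sum.cong refl)
    fix Yb assume "Yb \<in> ?S"
    then have cY: "card Yb = c" by simp
    show "(\<Sum>y\<in>UNIV - Yb. a y) / real ((CARD('k) - 1) choose c)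
           * ((\<Sum>y\<in>UNIV. l y) - (real CARD('k) - 1) / real (card Yb) * (\<Sum>y\<in>Yb. l y))
      = (L / N) * (\<Sum>y\<in>UNIV - Yb. a y)
          - ((real CARD('k) - 1) / real c / N) * ((\<Sum>y\<in>UNIV - Yb. a y) * (\<Sum>y\<in>Yb. l y))"
      unfolding cY N_def[symmetric] L_def[symmetric] by (simp add: divide_inverse algebra_simps)
  qed
  also have "\<dots> = (L / N) * (N * P) - ((real CARD('k) - 1) / real c / N) * (M * (P * L - Q))"
    by (simp only: sum_subtractf sum_distrib_left[symmetric] T1 T2)
  also have "\<dots> = Q"
  proof -
    have "((real CARD('k) - 1) / real c / N) * M = ((real CARD('k) - 1) / real c * M) / N"
      by simp
    also have "\<dots> = 1" unfolding NM using Npos by simp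
    finally have "((real CARD('k) - 1) / real c / N) * M = 1" .
    then have "((real CARD('k) - 1) / real c / N) * (M * (P * L - Q)) = P * L - Q"
      by (metis mult.assoc mult_1)
    then show ?thesis using Npos by simp
  qed
  finally show ?thesis unfolding Q_def .
qed
theorem lemma1:
  fixes X :: "'a::euclidean_space set"
    and p :: "'a \<Rightarrow> 'k::finite \<Rightarrow> real"
    and pc :: "'a \<Rightarrow> 'k set \<Rightarrow> real"
    and loss :: "real^'k \<Rightarrow> 'k \<Rightarrow> real"
    and g :: "'a \<Rightarrow> real^'k"
    and c :: nat
  assumes K2: "CARD('k) \<ge> 2"
    and c_range: "1 \<le> c" "c \<le> CARD('k) - 1"
    and X_meas: "X \<in> sets lborel"
    and p_nonneg: "\<And>x y. x \<in> X \<Longrightarrow> p x y \<ge> 0"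
    and p_int: "set_integrable lborel X (\<lambda>x. \<Sum>y\<in>UNIV. p x y)"
    and p_total: "(LINT x:X|lborel. (\<Sum>y\<in>UNIV. p x y)) = 1"
    and pc_nonneg: "\<And>x Yb. x \<in> X \<Longrightarrow> Yb \<in> compl_label_sets c \<Longrightarrow> pc x Yb \<ge> 0"
    and pc_int: "set_integrable lborel X (\<lambda>x. \<Sum>Yb\<in>compl_label_sets c. pc x Yb)"
    and pc_total: "(LINT x:X|lborel. (\<Sum>Yb\<in>compl_label_sets c. pc x Yb)) = 1"
    and generation: "\<And>x Yb. x \<in> X \<Longrightarrow> Yb \<in> compl_label_sets c \<Longrightarrow>
          pc x Yb = (\<Sum>y\<in>UNIV - Yb. p x y) / real ((CARD('k) - 1) choose c)"
    and loss_nonneg: "\<And>v y. loss v y \<ge> 0"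
    and R_finite: "set_integrable lborel X (\<lambda>x. \<Sum>y\<in>UNIV. p x y * loss (g x) y)"
    and Rc_finite: "set_integrable lborel X
          (\<lambda>x. \<Sum>Yb\<in>compl_label_sets c. pc x Yb * compl_loss loss (g x) Yb)"
  shows "risk X p loss g = compl_risk c X pc loss g"
  unfolding risk_def compl_risk_def
proof (rule set_lebesgue_integral_cong[OF X_meas])
  show "\<forall>x. x \<in> X \<longrightarrow> (\<Sum>y\<in>UNIV. p x y * loss (g x) y) =
      (\<Sum>Yb\<in>compl_label_sets c. pc x Yb * compl_loss loss (g x) Yb)"
  proof (intro allI impI)
    fix x assume x: "x \<in> X"
    have "(\<Sum>Yb\<in>compl_label_sets c. pc x Yb * compl_loss loss (g x) Yb)
       = (\<Sum>Yb\<in>{Yb::'k set. card Yb = c}. (\<Sum>y\<in>UNIV - Yb. p x y) / real ((CARD('k) - 1) choose c)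
           * ((\<Sum>y\<in>UNIV. loss (g x) y) - (real CARD('k) - 1) / real (card Yb) * (\<Sum>y\<in>Yb. loss (g x) y)))"
      unfolding compl_label_sets_def compl_loss_def
      by (intro sum.cong refl) (simp add: generation[OF x] compl_label_sets_def)
    also have "\<dots> = (\<Sum>y\<in>UNIV. p x y * loss (g x) y)"
      by (rule pointwise[OF K2 c_range])
    finally show "(\<Sum>y\<in>UNIV. p x y * loss (g x) y) =
      (\<Sum>Yb\<in>compl_label_sets c. pc x Yb * compl_loss loss (g x) Yb)" by simp
  qed
qed

end
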